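(* Let $\Sigma(s,t)$ (positive definite), $A_s(s,t),A_t(s,t)$, and symmetric $S_s(s,t),S_t(s,t)$, $(s,t)\in[0,1]^2$, be $n\times n$ matrix-valued functions satisfying, with $J=\sqrt{\mathrm{tr}(\Sigma A_s^{\mathsf{T}}A_s)\, \mathrm{tr}(\Sigma A_t^{\mathsf{T}} A_t)-[\tfrac{1}{2}\mathrm{tr}(\Sigma(A_s^{\mathsf{T}}A_t+A_t^{\mathsf{T}}A_s))]^2}$, $$J^{-1}\Big(A_s\, \mathrm{tr}(\Sigma A_t^{\mathsf{T}}A_t)-\tfrac{1}{2}A_t\, \mathrm{tr}(\Sigma (A_s^{\mathsf{T}}A_t+A_t^{\mathsf{T}}A_s))\Big)=2S_s,\qquad J^{-1}\Big(A_t\, \mathrm{tr}(\Sigma A_s^{\mathsf{T}}A_s)-\tfrac{1}{2}A_s\, \mathrm{tr}(\Sigma (A_s^{\mathsf{T}}A_t+A_t^{\mathsf{T}}A_s))\Big)=2S_t,$$ $$\partial_s S_s+\partial_t S_t+\tfrac{1}{2}J^{-1}\Big\{A_s^{\mathsf{T}}A_s\, \mathrm{tr}(\Sigma A_t^{\mathsf{T}}A_t)+A_t^{\mathsf{T}}A_t\,\mathrm{tr}(\Sigma A_s^{\mathsf{T}}A_s)-\tfrac{1}{2}(A_s^{\mathsf{T}}A_t+A_t^{\mathsf{T}}A_s)\,\mathrm{tr}(\Sigma (A_s^{\mathsf{T}}A_t+A_t^{\mathsf{T}}A_s))\Big\}=0,$$ $$\partial_s\Sigma=\Sigma A_s^{\mathsf{T}}+A_s\Sigma,\qquad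 \partial_t\Sigma=\Sigma A_t^{\mathsf{T}}+A_t\Sigma.$$ Define $\rho(s,t,x)=(2\pi)^{-n/2}\det(\Sigma(s,t))^{-1/2}e^{-\frac12 x^{\mathsf{T}}\Sigma(s,t)^{-1}x}$, $v_s(s,t,x)=A_s(s,t)x$, $v_t(s,t,x)=A_t(s,t)x$, $\Phi_s(s,t,x)=x^{\mathsf{T}}S_s(s,t)x$, $\Phi_t(s,t,x)=x^{\mathsf{T}}S_t(s,t)x$. Then, with $A=\sqrt{\int \|v_s\|^2\rho\, dx\int\|v_t\|^2\rho\, dx-(\int v_s\cdot v_t\,\rho\, dx)^2}$, the tuple $(\rho,v_s,v_t,\Phi_s,\Phi_t)$ solves the system $$A^{-1}\Big[v_s\int \|v_t\|^2\rho\,dx-v_t\int v_s\cdot v_t\,\rho\,dx\Big]=\nabla\Phi_s,\qquad A^{-1}\Big[v_t\int \|v_s\|^2\rho\,dx-v_s\int v_s\cdot v_t\,\rho\,dx\Big]=\nabla\Phi_t,$$ $$\partial_s\Phi_s+\partial_t\Phi_t+A^{-1}\Big[\tfrac{1}{2}\|v_s\|^2\int \|v_t\|^2\rho\,dx +\tfrac{1}{2}\|v_t\|^2\int\|v_s\|^2\rho\,dx - (v_t\cdot v_s)\int v_t\cdot v_s\,\rho\, dx\Big]=0,$$ $$\partial_s\rho+\nabla\cdot (\rho v_s)=0,\qquad \partial_t\rho+\nabla\cdot (\rho v_t)=0.$$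
   Context: All integrals are over $\mathbb{R}^n$; $\nabla$ and $\nabla\cdot$ act in $x$. *)

theory Defs
  imports "HOL-Analysis.Analysis"
begin

definition pos_def_mat :: "real^'n^'n \<Rightarrow> bool" where
  "pos_def_mat M \<longleftrightarrow> transpose M = M \<and> (\<forall>x. x \<noteq> 0 \<longrightarrow> 0 < x \<bullet> (M *v x))"

definition gauss_density :: "real^'n^'n \<Rightarrow> real^'n \<Rightarrow> real" where
  "gauss_density S x =
     (2 * pi) powr (- real CARD('n) / 2) * det S powr (- 1 / 2)
     * exp (- (1 / 2) * (x \<bullet> (matrix_inv S *v x)))"

text \<open>Divergence (trace) of a linear map on R^n, applied to the Frechet derivative of a vector field.\<close>
definition div_lin :: "(real^'n \<Rightarrow> real^'n) \<Rightarrow> real" where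
  "div_lin L = (\<Sum>i\<in>UNIV. L (axis i 1) $ i)"

end

theory Submission
  imports Defs "HOL-Probability.Probability"
begin

lemma pd_inj:
  assumes "pos_def_mat (S::real^'n^'n)"
  shows "inj ((*v) S)"
proof (rule linear_injective_0[THEN iffD2])
  show "linear ((*v) S)" by (simp add: matrix_vector_mul_linear)
  show "\<forall>x. S *v x = 0 \<longrightarrow> x = 0"
    using assms unfolding pos_def_mat_def by (metis inner_zero_right less_irrefl)
qed

lemma pd_det_nz:
  assumes "pos_def_mat (S::real^'n^'n)"
  shows "det S \<noteq> 0"
  using det_nz_iff_inj[of "(*v) S"] pd_inj[OF assms]
  by (simp add: matrix_vector_mul_linear matrix_of_matrix_vector_mul)

lemma pd_invertible:
  assumes "pos_def_mat (S::real^'n^'n)"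
  shows "invertible S"
  using pd_det_nz[OF assms] invertible_det_nz by blast

lemma inv_props:
  assumes "invertible (S::real^'n^'n)"
  shows "S ** matrix_inv S = mat 1" "matrix_inv S ** S = mat 1"
proof -
  have "\<exists>A'. S ** A' = mat 1 \<and> A' ** S = mat 1" using assms invertible_def by blast
  then have "S ** matrix_inv S = mat 1 \<and> matrix_inv S ** S = mat 1"
    unfolding matrix_inv_def by (rule someI_ex)
  then show "S ** matrix_inv S = mat 1" "matrix_inv S ** S = mat 1" by auto
qed

lemma inv_sym:
  assumes "invertible (S::real^'n^'n)" "transpose S = S"
  shows "transpose (matrix_inv S) = matrix_inv S"
proof -
  let ?P = "matrix_inv S"
  have "transpose ?P ** S = mat 1"
    by (metis assms(2) inv_props(1)[OF assms(1)] matrix_transpose_mul transpose_mat)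
  then have "transpose ?P = (transpose ?P ** S) ** ?P"
    by (metis inv_props(1)[OF assms(1)] matrix_mul_assoc matrix_mul_rid)
  then show ?thesis using \<open>transpose ?P ** S = mat 1\<close> by (simp add: matrix_mul_lid)
qed

lemma continuous_on_det_comp:
  fixes F :: "real \<Rightarrow> real^'n^'n"
  assumes "\<And>i j. continuous_on T (\<lambda>t. F t $ i $ j)"
  shows "continuous_on T (\<lambda>t. det (F t))"
  unfolding det_def
  by (intro continuous_intros assms)

lemma pd_det_pos:
  assumes "pos_def_mat (S::real^'n^'n)"
  shows "det S > 0"
proof (rule ccontr)
  assume "\<not> det S > 0"
  define F where "F = (\<lambda>\<tau>::real. (1 - \<tau>) *\<^sub>R (mat 1::real^'n^'n) + \<tau> *\<^sub>R S)"
  have c: "continuous_on {0..1} (\<lambda>t. det (F t))"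
    by (rule continuous_on_det_comp) (auto simp: F_def intro!: continuous_intros)
  have "det (F 1) \<le> 0" "0 \<le> det (F 0)" using \<open>\<not> det S > 0\<close> by (auto simp: F_def)
  from IVT2'[OF this _ c] obtain \<tau> where t: "0 \<le> \<tau>" "\<tau> \<le> 1" "det (F \<tau>) = 0" by auto
  have "pos_def_mat (F \<tau>)"
    unfolding pos_def_mat_def
  proof safe
    show "transpose (F \<tau>) = F \<tau>"
      using assms unfolding pos_def_mat_def F_def
      by (simp add: transpose_def vec_eq_iff mat_def)
    fix x :: "real^'n" assume "x \<noteq> 0"
    have "x \<bullet> (F \<tau> *v x) = (1 - \<tau>) * (x \<bullet> x) + \<tau> * (x \<bullet> (S *v x))"
      by (simp add: F_def scaleR_matrix_vector_assoc[symmetric] matrix_vector_mult_add_rdistrib inner_add_right)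
    moreover have "x \<bullet> x > 0" "x \<bullet> (S *v x) > 0" using \<open>x \<noteq> 0\<close> assms unfolding pos_def_mat_def by auto
    moreover have "(1 - \<tau>) * (x \<bullet> x) \<ge> 0" "\<tau> * (x \<bullet> (S *v x)) \<ge> 0"
      using t \<open>x \<bullet> x > 0\<close> \<open>x \<bullet> (S *v x) > 0\<close> by auto
    moreover have "(1 - \<tau>) * (x \<bullet> x) > 0 \<or> \<tau> * (x \<bullet> (S *v x)) > 0"
      using t \<open>x \<bullet> x > 0\<close> \<open>x \<bullet> (S *v x) > 0\<close> by (cases "\<tau> = 1") auto
    ultimately show "0 < x \<bullet> (F \<tau> *v x)" by linarith
  qed
  then show False using pd_det_nz t by blast
qed

definition detD :: "real^'n^'n \<Rightarrow> real^'n^'n \<Rightarrow> real" where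
  "detD M H = (\<Sum>p\<in>{p. p permutes (UNIV::'n set)}. of_int (sign p) *
      (\<Sum>i\<in>UNIV. H$i$(p i) * (\<Prod>j\<in>UNIV - {i}. M$j$(p j))))"

lemma matrix_mul_scaleR_right: "(A::real^'n^'m) ** (r *\<^sub>R B) = r *\<^sub>R (A ** (B::real^'k^'n))"
  by (simp add: vec_eq_iff matrix_matrix_mult_def scaleR_sum_right sum_distrib_left algebra_simps)

lemma entry_has_derivative:
  "((\<lambda>A::real^'n^'m. A$i$k) has_derivative (\<lambda>H. H$i$k)) (at M)"
proof -
  have "bounded_linear (\<lambda>A::real^'n^'m. A$i$k)"
    using bounded_linear_compose[OF bounded_linear_vec_nth[of k] bounded_linear_vec_nth[of i]] by simp
  then show ?thesis by (rule bounded_linear_imp_has_derivative)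
qed

lemma det_has_derivative_gen:
  "(det has_derivative detD M) (at (M::real^'n^'n))"
proof -
  have "((\<lambda>A::real^'n^'n. \<Sum>p\<in>{p. p permutes (UNIV::'n set)}. of_int (sign p) * (\<Prod>i\<in>UNIV. A$i$(p i)))
        has_derivative detD M) (at M)"
    unfolding detD_def
    by (intro has_derivative_sum has_derivative_mult_right has_derivative_prod entry_has_derivative)
  then show ?thesis unfolding det_def[abs_def] .
qed

lemma detD_id: "detD (mat 1) H = trace (H::real^'n^'n)"
proof -
  let ?P = "{p. p permutes (UNIV::'n set)}"
  let ?f = "\<lambda>p. of_int (sign p) * (\<Sum>i\<in>UNIV. H$i$(p i) * (\<Prod>j\<in>UNIV - {i}. (mat 1::real^'n^'n)$j$(p j)))"
  have z: "?f p = 0" if "p \<in> ?P - {id}" for p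
  proof -
    have pp: "p permutes UNIV" "p \<noteq> id" using that by auto
    then obtain k where k: "p k \<noteq> k" by (metis eq_id_iff)
    have pz: "(\<Prod>j\<in>UNIV - {i}. (mat 1::real^'n^'n)$j$(p j)) = 0" for i
    proof -
      have "\<exists>j. j \<noteq> i \<and> p j \<noteq> j"
      proof (cases "p i = i")
        case True then show ?thesis using k by metis
      next
        case False
        have "p (p i) \<noteq> p i"
          using False pp(1) by (metis permutes_inj injD)
        then show ?thesis using False by metis
      qed
      then obtain j where "j \<noteq> i" "p j \<noteq> j" by blast
      then show ?thesis
        by (intro prod_zero) (auto simp: mat_def intro!: bexI[of _ j])
    qed
    show ?thesis by (simp only: pz mult_zero_right mult_zero_left sum.neutral_const)
  qed
  have "detD (mat 1) H = sum ?f ?P" unfolding detD_def by simp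
  also have "\<dots> = ?f id + sum ?f (?P - {id})"
    by (rule sum.remove) (auto simp: permutes_id)
  also have "sum ?f (?P - {id}) = 0" using z by (intro sum.neutral) auto
  also have "?f id = trace H"
    by (simp add: trace_def mat_def sign_id)
  finally show ?thesis by simp
qed

lemma det_has_derivative:
  assumes "invertible (M::real^'n^'n)"
  shows "(det has_derivative (\<lambda>H. det M * trace (matrix_inv M ** H))) (at M)"
proof -
  let ?P = "matrix_inv M"
  have eq: "det X = det M * det (?P ** X)" for X
    by (metis det_mul inv_props(1)[OF assms] matrix_mul_assoc matrix_mul_lid)
  have lin: "bounded_linear (\<lambda>X::real^'n^'n. ?P ** X)"
  proof -
    have "linear (\<lambda>X::real^'n^'n. ?P ** X)"
      by (rule linearI) (simp_all add: matrix_add_ldistrib matrix_mul_scaleR_right)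
    then show ?thesis by (simp add: linear_conv_bounded_linear)
  qed
  have d1: "((\<lambda>X. ?P ** X) has_derivative (\<lambda>X. ?P ** X)) (at M)"
    by (rule bounded_linear_imp_has_derivative[OF lin])
  have "?P ** M = mat 1" using inv_props(2)[OF assms] .
  then have d2: "(det has_derivative detD (mat 1)) (at (?P ** M))"
    using det_has_derivative_gen by metis
  have "((\<lambda>X. det (?P ** X)) has_derivative (\<lambda>H. detD (mat 1) (?P ** H))) (at M)"
    using has_derivative_compose[OF d1 d2] by (simp add: o_def)
  then have "((\<lambda>X. det M * det (?P ** X)) has_derivative (\<lambda>H. det M * detD (mat 1) (?P ** H))) (at M)"
    by (rule has_derivative_mult_right)
  then show ?thesis by (simp add: eq[symmetric] detD_id)
qed

definition mn :: "real^'n^'m \<Rightarrow> real" where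
  "mn M = (\<Sum>i\<in>UNIV. \<Sum>j\<in>UNIV. \<bar>M$i$j\<bar>)"

lemma mn_nonneg: "mn M \<ge> 0"
  unfolding mn_def by (intro sum_nonneg) auto

lemma mv_bound: "norm (M *v z) \<le> mn M * norm (z::real^'n)"
proof -
  have "norm (M *v z) \<le> (\<Sum>i\<in>UNIV. \<bar>(M *v z)$i\<bar>)" by (rule norm_le_l1_cart)
  also have "\<dots> \<le> (\<Sum>i\<in>UNIV. \<Sum>j\<in>UNIV. \<bar>M$i$j\<bar> * norm z)"
  proof (rule sum_mono)
    fix i
    have "\<bar>(M *v z)$i\<bar> = \<bar>\<Sum>j\<in>UNIV. M$i$j * z$j\<bar>" by (simp add: matrix_vector_mult_def)
    also have "\<dots> \<le> (\<Sum>j\<in>UNIV. \<bar>M$i$j * z$j\<bar>)" by (rule sum_abs)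
    also have "\<dots> \<le> (\<Sum>j\<in>UNIV. \<bar>M$i$j\<bar> * norm z)"
      by (intro sum_mono) (simp add: abs_mult mult_left_mono component_le_norm_cart)
    finally show "\<bar>(M *v z)$i\<bar> \<le> (\<Sum>j\<in>UNIV. \<bar>M$i$j\<bar> * norm z)" .
  qed
  also have "\<dots> = mn M * norm z" by (simp add: mn_def sum_distrib_right)
  finally show ?thesis .
qed

lemma entry_vderiv:
  fixes F :: "real \<Rightarrow> real^'n^'m"
  assumes "(F has_vector_derivative F') (at s within S)"
  shows "((\<lambda>s'. F s' $ i $ j) has_real_derivative F' $ i $ j) (at s within S)"
proof -
  have "(F has_derivative (\<lambda>h. h *\<^sub>R F')) (at s within S)"
    using assms by (simp add: has_vector_derivative_def)
  from has_derivative_compose[OF this entry_has_derivative]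
  have "((\<lambda>s'. F s' $ i $ j) has_derivative (\<lambda>h. h * F' $ i $ j)) (at s within S)"
    by (simp add: o_def)
  then show ?thesis
    by (simp add: has_field_derivative_def mult.commute[of _ "F' $ i $ j"])
qed

lemma inv_quad_deriv:
  fixes F :: "real \<Rightarrow> real^'n^'n"
  assumes d: "(F has_vector_derivative F') (at s within S)" and inv: "invertible (F s)"
  shows "((\<lambda>s'. x \<bullet> (matrix_inv (F s') *v x)) has_real_derivative
           - (x \<bullet> (matrix_inv (F s) *v (F' *v (matrix_inv (F s) *v x))))) (at s within S)"
proof -
  define P where "P = matrix_inv (F s)"
  define y where "y = (\<lambda>s'. matrix_inv (F s') *v x)"
  have ent: "((\<lambda>s'. F s' $ i $ j) has_real_derivative F' $ i $ j) (at s within S)" for i j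
    using entry_vderiv[OF d] .
  have Ftend: "(F \<longlongrightarrow> F s) (at s within S)"
    using has_vector_derivative_continuous[OF d] by (simp add: continuous_within)
  have entt: "((\<lambda>s'. F s' $ i $ j) \<longlongrightarrow> F s $ i $ j) (at s within S)" for i j
    by (intro tendsto_vec_nth Ftend)
  have "isCont det (F s)"
    using has_derivative_continuous[OF det_has_derivative_gen] .
  from isCont_tendsto_compose[OF this Ftend]
  have "((\<lambda>s'. det (F s')) \<longlongrightarrow> det (F s)) (at s within S)" .
  moreover have "det (F s) \<noteq> 0" using inv invertible_det_nz by blast
  ultimately have "eventually (\<lambda>s'. det (F s') \<noteq> 0) (at s within S)"
    by (rule tendsto_imp_eventually_ne)
  then have ev_eq: "eventually (\<lambda>s'. F s' *v y s' = x) (at s within S)"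
    by eventually_elim
       (metis y_def invertible_det_nz inv_props(1) matrix_vector_mul_assoc matrix_vector_mul_lid)
  have mn_t: "((\<lambda>s'. mn (F s' - F s)) \<longlongrightarrow> 0) (at s within S)"
  proof -
    have "((\<lambda>s'. \<Sum>i\<in>UNIV. \<Sum>j\<in>UNIV. \<bar>F s' $ i $ j - F s $ i $ j\<bar>) \<longlongrightarrow>
           (\<Sum>i\<in>UNIV. \<Sum>j\<in>UNIV. \<bar>F s $ i $ j - F s $ i $ j\<bar>)) (at s within S)"
      by (intro tendsto_intros entt)
    then show ?thesis by (simp add: mn_def)
  qed
  define m where "m = mn P"
  define K where "K = m + 1"
  have K: "K > 0" using mn_nonneg[of P] by (simp add: K_def m_def)
  have lowb: "norm z \<le> K * norm (F s *v z)" for z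
  proof -
    have "z = P *v (F s *v z)"
      by (metis P_def inv inv_props(2) matrix_vector_mul_assoc matrix_vector_mul_lid)
    then have "norm z \<le> m * norm (F s *v z)" using mv_bound[of P "F s *v z"] by (simp add: m_def)
    also have "\<dots> \<le> K * norm (F s *v z)" by (simp add: K_def distrib_right)
    finally show ?thesis .
  qed
  have "eventually (\<lambda>s'. mn (F s' - F s) < 1 / (2 * K)) (at s within S)"
    using order_tendstoD(2)[OF mn_t] K by simp
  then have ev_b: "eventually (\<lambda>s'. norm (y s' - y s) \<le> norm (mn (F s' - F s)) * (m * (2 * K * norm x))) (at s within S)"
    using ev_eq
  proof eventually_elim
    case (elim s')
    let ?D = "F s' - F s"
    have e1: "F s *v y s' = x - ?D *v y s'"
      using elim(2) by (simp add: matrix_vector_mult_diff_rdistrib)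
    have "norm (y s') \<le> K * norm (x - ?D *v y s')" using lowb[of "y s'"] e1 by simp
    also have "\<dots> \<le> K * (norm x + mn ?D * norm (y s'))"
      using K mv_bound[of ?D "y s'"] norm_triangle_ineq4[of x "?D *v y s'"]
      by (intro mult_left_mono) auto
    also have "\<dots> \<le> K * norm x + norm (y s') / 2"
    proof -
      have "K * (mn ?D * norm (y s')) \<le> K * (1 / (2 * K) * norm (y s'))"
        using elim(1) K by (intro mult_left_mono mult_right_mono) auto
      then show ?thesis using K by (simp add: algebra_simps)
    qed
    finally have yb: "norm (y s') \<le> 2 * K * norm x" by simp
    have "y s' - y s = P *v (F s *v y s') - P *v x"
      using elim(2) by (metis P_def y_def inv inv_props(2) matrix_vector_mul_assoc matrix_vector_mul_lid)
    also have "\<dots> = - (P *v (?D *v y s'))"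
      using e1 by (simp add: matrix_vector_mult_diff_distrib)
    finally have "norm (y s' - y s) = norm (P *v (?D *v y s'))" by simp
    also have "\<dots> \<le> m * norm (?D *v y s')" using mv_bound by (simp add: m_def)
    also have "\<dots> \<le> m * (mn ?D * norm (y s'))"
      using mv_bound[of ?D "y s'"] mn_nonneg[of P] by (intro mult_left_mono) (auto simp: m_def)
    also have "\<dots> \<le> m * (mn ?D * (2 * K * norm x))"
      using yb mn_nonneg[of P] mn_nonneg[of ?D] by (intro mult_left_mono) (auto simp: m_def)
    finally show ?case using mn_nonneg[of ?D] by (simp add: algebra_simps)
  qed
  have "((\<lambda>s'. y s' - y s) \<longlongrightarrow> 0) (at s within S)"
    by (rule tendsto_0_le[OF mn_t ev_b])
  then have ytend: "(y \<longlongrightarrow> y s) (at s within S)"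
    using Lim_null by blast
  let ?Q = "\<lambda>s'. - (\<Sum>i\<in>UNIV. \<Sum>k\<in>UNIV. \<Sum>j\<in>UNIV.
              x$i * (P$i$k * ((F s' $ k $ j - F s $ k $ j) / (s' - s) * y s' $ j)))"
  have T: "(?Q \<longlongrightarrow> - (\<Sum>i\<in>UNIV. \<Sum>k\<in>UNIV. \<Sum>j\<in>UNIV. x$i * (P$i$k * (F' $ k $ j * y s $ j))))
          (at s within S)"
    using ent unfolding has_field_derivative_iff
    by (intro tendsto_intros tendsto_vec_nth ytend) auto
  have L: "- (\<Sum>i\<in>UNIV. \<Sum>k\<in>UNIV. \<Sum>j\<in>UNIV. x$i * (P$i$k * (F' $ k $ j * y s $ j)))
      = - (x \<bullet> (matrix_inv (F s) *v (F' *v (matrix_inv (F s) *v x))))"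
    by (simp add: P_def y_def inner_vec_def matrix_vector_mult_def sum_distrib_left)
  have ev: "eventually (\<lambda>s'. ?Q s' = (x \<bullet> y s' - x \<bullet> y s) / (s' - s)) (at s within S)"
    using ev_eq eventually_neq_at_within[of s s S]
  proof eventually_elim
    case (elim s')
    let ?D = "F s' - F s"
    have e1: "F s *v y s' = x - ?D *v y s'"
      using elim(1) by (simp add: matrix_vector_mult_diff_rdistrib)
    have "y s' - y s = P *v (F s *v y s') - P *v x"
      by (metis P_def y_def inv inv_props(2) matrix_vector_mul_assoc matrix_vector_mul_lid)
    also have "\<dots> = - (P *v (?D *v y s'))"
      using e1 by (simp add: matrix_vector_mult_diff_distrib)
    finally have "x \<bullet> y s' - x \<bullet> y s = - (x \<bullet> (P *v (?D *v y s')))"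
      by (metis inner_diff_right inner_minus_right)
    also have "\<dots> = - (\<Sum>i\<in>UNIV. \<Sum>k\<in>UNIV. \<Sum>j\<in>UNIV.
              x$i * (P$i$k * ((F s' $ k $ j - F s $ k $ j) * y s' $ j)))"
      by (simp add: inner_vec_def matrix_vector_mult_def sum_distrib_left)
    finally have E: "x \<bullet> y s' - x \<bullet> y s = - (\<Sum>i\<in>UNIV. \<Sum>k\<in>UNIV. \<Sum>j\<in>UNIV.
              x$i * (P$i$k * ((F s' $ k $ j - F s $ k $ j) * y s' $ j)))" .
    have "?Q s' = - ((\<Sum>i\<in>UNIV. \<Sum>k\<in>UNIV. \<Sum>j\<in>UNIV.
              x$i * (P$i$k * ((F s' $ k $ j - F s $ k $ j) * y s' $ j))) / (s' - s))"
      unfolding sum_divide_distrib minus_divide_left[symmetric]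
      by (intro arg_cong[where f=uminus] sum.cong refl) simp
    then show ?case using E by simp
  qed
  have "((\<lambda>s'. (x \<bullet> y s' - x \<bullet> y s) / (s' - s)) \<longlongrightarrow>
          - (x \<bullet> (matrix_inv (F s) *v (F' *v (matrix_inv (F s) *v x))))) (at s within S)"
    using Lim_transform_eventually[OF T ev] unfolding L .
  then show ?thesis
    unfolding has_field_derivative_iff y_def .
qed

lemma exp_abs_le: "exp \<bar>y::real\<bar> \<le> exp y + exp (-y)"
  by (cases "y \<ge> 0") (auto simp: add_increasing2 add_increasing)

lemma sq_le_exp: "(y::real)^2 \<le> 2 * exp \<bar>y\<bar>"
proof -
  have "1 + \<bar>y\<bar> + \<bar>y\<bar>^2/2 \<le> exp \<bar>y\<bar>" by (rule exp_lower_Taylor_quadratic) simp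
  then show ?thesis by simp
qed

lemma quart_le_exp: "(y::real)^4 \<le> 64 * exp \<bar>y\<bar>"
proof -
  have h: "1 + \<bar>y\<bar>/2 + (\<bar>y\<bar>/2)^2/2 \<le> exp (\<bar>y\<bar>/2)" by (rule exp_lower_Taylor_quadratic) simp
  have "y^2/8 \<le> exp (\<bar>y\<bar>/2)" using h by (simp add: power_divide)
  then have "(y^2/8)^2 \<le> (exp (\<bar>y\<bar>/2))^2" by (intro power_mono) auto
  also have "(exp (\<bar>y\<bar>/2))^2 = exp \<bar>y\<bar>" by (simp add: exp_double[symmetric] power2_eq_square exp_add[symmetric])
  finally show ?thesis by (simp add: power_divide power2_eq_square[symmetric] power_mult[symmetric])
qed

lemma cosh_taylor:
  fixes y :: real
  shows "0 \<le> exp y + exp (-y) - 2 - y^2" "exp y + exp (-y) - 2 - y^2 \<le> y^4 * exp \<bar>y\<bar> / 12"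
proof -
  obtain t1 where t1: "\<bar>t1\<bar> \<le> \<bar>y\<bar>" "exp y = (\<Sum>m<4. y^m / fact m) + exp t1 / fact 4 * y^4"
    using Maclaurin_exp_le[of y 4] by blast
  obtain t2 where t2: "\<bar>t2\<bar> \<le> \<bar>y\<bar>" "exp (-y) = (\<Sum>m<4. (-y)^m / fact m) + exp t2 / fact 4 * (-y)^4"
    using Maclaurin_exp_le[of "-y" 4] by auto
  have e: "exp y + exp (-y) - 2 - y^2 = (exp t1 + exp t2) / 24 * y^4"
    by (simp add: t1(2) t2(2) eval_nat_numeral field_simps)
  show "0 \<le> exp y + exp (-y) - 2 - y^2" unfolding e by (intro mult_nonneg_nonneg) (auto intro: add_nonneg_nonneg)
  have "exp t1 + exp t2 \<le> 2 * exp \<bar>y\<bar>" using t1(1) t2(1) by (smt (verit) exp_le_cancel_iff)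
  then have "(exp t1 + exp t2) / 24 * y^4 \<le> (2 * exp \<bar>y\<bar>) / 24 * y^4"
    by (intro mult_right_mono divide_right_mono) auto
  then show "exp y + exp (-y) - 2 - y^2 \<le> y^4 * exp \<bar>y\<bar> / 12" unfolding e by (simp add: mult_ac)
qed

lemma squeeze_lim:
  fixes M A B D :: real
  assumes "\<And>\<tau>. 0 < \<tau> \<Longrightarrow> \<tau> \<le> 1 \<Longrightarrow> A - B * \<tau>^2 \<le> M"
      and "\<And>\<tau>. 0 < \<tau> \<Longrightarrow> \<tau> \<le> 1 \<Longrightarrow> M \<le> A * exp (D * \<tau>^2)"
  shows "M = A"
proof -
  have ev: "eventually (\<lambda>\<tau>::real. 0 < \<tau> \<and> \<tau> \<le> 1) (at_right 0)"
    by (simp add: eventually_at_right_less eventually_conj eventually_at_right_field) (auto intro: exI[of _ 1])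
  have t1: "((\<lambda>\<tau>::real. A - B * \<tau>^2) \<longlongrightarrow> A - B * 0^2) (at_right 0)"
    by (intro tendsto_intros)
  have t2: "((\<lambda>\<tau>::real. A * exp (D * \<tau>^2)) \<longlongrightarrow> A * exp (D * 0^2)) (at_right 0)"
    by (intro tendsto_intros)
  have "A - B * 0^2 \<le> M"
    by (rule tendsto_le[OF _ tendsto_const t1]) (use ev assms(1) in \<open>auto elim: eventually_mono\<close>)
  moreover have "M \<le> A * exp (D * 0^2)"
    by (rule tendsto_le[OF _ t2 tendsto_const]) (use ev assms(2) in \<open>auto elim: eventually_mono\<close>)
  ultimately show ?thesis by simp
qed

lemma gauss1_integrable:
  assumes "(l::real) > 0"
  shows "integrable lborel (\<lambda>t::real. exp (- l * t^2))"
proof -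
  have "integrable lborel (\<lambda>t::real. std_normal_density t)" by simp
  from lborel_integrable_real_affine[OF this, of "sqrt (2 * l)" 0]
  have "integrable lborel (\<lambda>t. std_normal_density (sqrt (2 * l) * t))" using assms by simp
  then have "integrable lborel (\<lambda>t. sqrt (2 * pi) * std_normal_density (sqrt (2 * l) * t))"
    by simp
  moreover have "sqrt (2 * pi) * std_normal_density (sqrt (2 * l) * t) = exp (- l * t^2)" for t
    using assms by (simp add: std_normal_density_def power_mult_distrib)
  ultimately show ?thesis by simp
qed

lemma gaussE_integrable:
  assumes "(l::real) > 0"
  shows "integrable lborel (\<lambda>x::'a::euclidean_space. exp (- l * (norm x)^2))"
proof (rule integrableI_nonneg)
  show "(\<lambda>x::'a. exp (- l * (norm x)^2)) \<in> borel_measurable lborel" by measurable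
  show "AE x in lborel. 0 \<le> exp (- l * (norm (x::'a))^2)" by simp
  have eq: "ennreal (exp (- l * (norm x)^2)) = (\<Prod>b\<in>Basis. ennreal (exp (- l * (x \<bullet> b)^2)))" for x :: 'a
  proof -
    have "(norm x)^2 = (\<Sum>b\<in>Basis. (x \<bullet> b)^2)"
      unfolding power2_norm_eq_inner by (subst euclidean_inner) (simp add: power2_eq_square)
    then have "exp (- l * (norm x)^2) = (\<Prod>b\<in>Basis. exp (- l * (x \<bullet> b)^2))"
      by (simp add: sum_distrib_left exp_sum[symmetric] sum_negf)
    then show ?thesis by (simp add: prod_ennreal)
  qed
  have fin: "(\<integral>\<^sup>+t. ennreal (exp (- l * t^2)) \<partial>lborel) < \<infinity>"
    using gauss1_integrable[OF assms] unfolding integrable_iff_bounded by simp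
  have "(\<integral>\<^sup>+x. ennreal (exp (- l * (norm (x::'a))^2)) \<partial>lborel) =
        (\<integral>\<^sup>+x. (\<Prod>b\<in>Basis. ennreal (exp (- l * ((x::'a) \<bullet> b)^2))) \<partial>lborel)"
    by (simp only: eq)
  also have "\<dots> = (\<Prod>b\<in>(Basis::'a set). (\<integral>\<^sup>+t. ennreal (exp (- l * t^2)) \<partial>lborel))"
    by (rule nn_integral_lborel_prod[where f="\<lambda>b t. ennreal (exp (- l * t^2))"]) auto
  also have "\<dots> < \<infinity>"
    using fin by (simp add: power_less_top_ennreal)
  finally show "(\<integral>\<^sup>+x. ennreal (exp (- l * (norm (x::'a))^2)) \<partial>lborel) < \<infinity>" .
qed

lemma lborel_translate:
  fixes f :: "'a::euclidean_space \<Rightarrow> real"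
  assumes [measurable]: "f \<in> borel_measurable borel"
  shows "integrable lborel (\<lambda>x. f (c + x)) \<longleftrightarrow> integrable lborel f"
    and "(\<integral>x. f (c + x) \<partial>lborel) = (\<integral>x. f x \<partial>lborel)"
proof -
  have m: "(+) c \<in> borel \<rightarrow>\<^sub>M borel" by measurable
  have m': "(+) c \<in> lborel \<rightarrow>\<^sub>M borel" by measurable
  show "integrable lborel (\<lambda>x. f (c + x)) \<longleftrightarrow> integrable lborel f"
    using integrable_distr_eq[OF m' assms, symmetric] lborel_distr_plus[of c] by simp
  show "(\<integral>x. f (c + x) \<partial>lborel) = (\<integral>x. f x \<partial>lborel)"
    using integral_distr[OF m' assms, symmetric] lborel_distr_plus[of c] by simp
qed

lemma coercive:
  fixes Q :: "real^'n^'n"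
  assumes "\<And>x. x \<noteq> 0 \<Longrightarrow> 0 < x \<bullet> (Q *v x)"
  shows "\<exists>l>0. \<forall>x. l * (norm x)^2 \<le> x \<bullet> (Q *v x)"
proof -
  let ?f = "\<lambda>x::real^'n. x \<bullet> (Q *v x)"
  have c: "continuous_on (sphere 0 1) ?f"
    by (intro continuous_intros linear_continuous_on matrix_vector_mul_bounded_linear)
  have ne: "sphere (0::real^'n) 1 \<noteq> {}"
  proof -
    have "axis (undefined::'n) (1::real) \<in> sphere 0 1" by simp
    then show ?thesis by blast
  qed
  obtain x0 where x0: "x0 \<in> sphere 0 1" "\<forall>y\<in>sphere 0 1. ?f x0 \<le> ?f y"
    using continuous_attains_inf[OF compact_sphere ne c] by blast
  have pos: "?f x0 > 0" using x0(1) assms by (metis mem_sphere_0 norm_zero zero_neq_one)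
  show ?thesis
  proof (intro exI conjI allI)
    show "?f x0 > 0" by (rule pos)
    fix x :: "real^'n"
    show "?f x0 * (norm x)^2 \<le> ?f x"
    proof (cases "x = 0")
      case True then show ?thesis by simp
    next
      case False
      let ?u = "(1 / norm x) *\<^sub>R x"
      have "?u \<in> sphere 0 1" using False by simp
      then have "?f x0 \<le> ?f ?u" using x0 by blast
      also have "?f ?u = ?f x / (norm x)^2"
        by (simp add: matrix_vector_mult_scaleR power2_eq_square)
      finally show ?thesis using False by (simp add: field_simps)
    qed
  qed
qed

definition gq :: "real^'n^'n \<Rightarrow> real^'n \<Rightarrow> real" where
  "gq P x = exp (-(1/2) * (x \<bullet> (P *v x)))"

lemma mv_inner_transpose: "((A::real^'n^'m) *v z) \<bullet> w = z \<bullet> (transpose A *v w)"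
  unfolding inner_vec_def matrix_vector_mult_def transpose_def
  by (simp add: sum_distrib_left sum_distrib_right mult_ac) (rule sum.swap)

lemma sym_inner: "transpose A = A \<Longrightarrow> ((A::real^'n^'n) *v z) \<bullet> w = z \<bullet> (A *v w)"
  by (metis mv_inner_transpose)

lemma pw_ineqs:
  fixes a g \<tau> :: real
  assumes t: "0 < \<tau>" "\<tau> \<le> 1" and g: "0 \<le> g"
  shows "a^2 * g \<le> (exp (\<tau> * a) * g + exp (- \<tau> * a) * g - 2 * g) / \<tau>^2"
    and "(exp (\<tau> * a) * g + exp (- \<tau> * a) * g - 2 * g) / \<tau>^2 \<le> a^2 * g + 6 * \<tau>^2 * (exp (2 * a) * g + exp (- 2 * a) * g)"
    and "a^2 * g \<le> 2 * (exp (1 * a) * g + exp (- 1 * a) * g)"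
proof -
  have e: "(exp (\<tau> * a) * g + exp (- \<tau> * a) * g - 2 * g) / \<tau>^2 = (exp (\<tau> * a) + exp (- (\<tau> * a)) - 2) / \<tau>^2 * g"
    by (simp add: field_simps)
  have l: "(\<tau> * a)^2 \<le> exp (\<tau> * a) + exp (- (\<tau> * a)) - 2" using cosh_taylor(1)[of "\<tau> * a"] by simp
  then have "a^2 \<le> (exp (\<tau> * a) + exp (- (\<tau> * a)) - 2) / \<tau>^2"
    using t by (simp add: field_simps power_mult_distrib)
  then show "a^2 * g \<le> (exp (\<tau> * a) * g + exp (- \<tau> * a) * g - 2 * g) / \<tau>^2"
    unfolding e using g by (rule mult_right_mono)
  have u: "exp (\<tau> * a) + exp (- (\<tau> * a)) - 2 - (\<tau> * a)^2 \<le> (\<tau> * a)^4 * exp \<bar>\<tau> * a\<bar> / 12"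
    using cosh_taylor(2)[of "\<tau> * a"] by simp
  have "\<bar>\<tau> * a\<bar> \<le> \<bar>a\<bar>" using t by (simp add: abs_mult mult_left_le_one_le)
  then have "(\<tau> * a)^4 * exp \<bar>\<tau> * a\<bar> / 12 \<le> \<tau>^4 * (a^4 * exp \<bar>a\<bar>) / 12"
  proof -
    assume h: "\<bar>\<tau> * a\<bar> \<le> \<bar>a\<bar>"
    have "exp \<bar>\<tau> * a\<bar> \<le> exp \<bar>a\<bar>" using h by simp
    then have "\<tau>^4 * a^4 * exp \<bar>\<tau> * a\<bar> \<le> \<tau>^4 * a^4 * exp \<bar>a\<bar>"
      by (intro mult_left_mono) auto
    then show ?thesis by (simp add: power_mult_distrib mult_ac)
  qed
  also have "a^4 * exp \<bar>a\<bar> \<le> 64 * exp \<bar>a\<bar> * exp \<bar>a\<bar>"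
    using quart_le_exp[of a] by (intro mult_right_mono) auto
  also have "64 * exp \<bar>a\<bar> * exp \<bar>a\<bar> = 64 * exp \<bar>2 * a\<bar>"
    by (simp add: mult_exp_exp abs_mult)
  also have "exp \<bar>2 * a\<bar> \<le> exp (2 * a) + exp (- 2 * a)"
    using exp_abs_le[of "2 * a"] by simp
  finally have "exp (\<tau> * a) + exp (- (\<tau> * a)) - 2 - (\<tau> * a)^2 \<le> \<tau>^4 * (64 * (exp (2 * a) + exp (- 2 * a))) / 12"
    using u t by (smt (verit, best) divide_right_mono mult_left_mono zero_le_power)
  then have "(exp (\<tau> * a) + exp (- (\<tau> * a)) - 2) / \<tau>^2 \<le> a^2 + \<tau>^2 * (64 * (exp (2 * a) + exp (- 2 * a))) / 12"
    using t by (simp add: field_simps power_mult_distrib)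
  also have "\<dots> \<le> a^2 + 6 * \<tau>^2 * (exp (2 * a) + exp (- 2 * a))"
  proof -
    have z: "0 \<le> \<tau>^2 * (exp (2 * a) + exp (- 2 * a))" by simp
    have "\<tau>^2 * (64 * (exp (2 * a) + exp (- 2 * a))) / 12 = (16/3) * (\<tau>^2 * (exp (2 * a) + exp (- 2 * a)))"
      by simp
    then show ?thesis using z by linarith
  qed
  finally have "(exp (\<tau> * a) + exp (- (\<tau> * a)) - 2) / \<tau>^2 * g \<le> (a^2 + 6 * \<tau>^2 * (exp (2 * a) + exp (- 2 * a))) * g"
    using g by (rule mult_right_mono)
  then show "(exp (\<tau> * a) * g + exp (- \<tau> * a) * g - 2 * g) / \<tau>^2 \<le> a^2 * g + 6 * \<tau>^2 * (exp (2 * a) * g + exp (- 2 * a) * g)"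
    unfolding e by (simp add: algebra_simps)
  have a2: "a^2 \<le> 2 * (exp a + exp (- a))" using sq_le_exp[of a] exp_abs_le[of a] by simp
  then show "a^2 * g \<le> 2 * (exp (1 * a) * g + exp (- 1 * a) * g)"
  proof -
    have "a^2 * g \<le> (2 * (exp a + exp (- a))) * g" by (rule mult_right_mono[OF a2 g])
    then show ?thesis by (simp add: ring_distribs mult_ac)
  qed
qed

context
  fixes S :: "real^'n^'n"
  assumes pd: "pos_def_mat S"
begin

lemma Ssym: "transpose S = S" using pd unfolding pos_def_mat_def by blast
lemma Sinv: "invertible S" using pd_invertible[OF pd] .
lemma SP: "S ** matrix_inv S = mat 1" using inv_props(1)[OF Sinv] .
lemma PS: "matrix_inv S ** S = mat 1" using inv_props(2)[OF Sinv] .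
lemma Psym: "transpose (matrix_inv S) = matrix_inv S" using inv_sym[OF Sinv Ssym] .

lemma PSv: "matrix_inv S *v (S *v u) = u"
  by (metis PS matrix_vector_mul_assoc matrix_vector_mul_lid)
lemma SPv: "S *v (matrix_inv S *v u) = u"
  by (metis SP matrix_vector_mul_assoc matrix_vector_mul_lid)

lemma Ppos: "x \<noteq> 0 \<Longrightarrow> 0 < x \<bullet> (matrix_inv S *v x)"
proof -
  assume "x \<noteq> 0"
  let ?z = "matrix_inv S *v x"
  have "?z \<noteq> 0" using \<open>x \<noteq> 0\<close> SPv[of x] by auto
  then have "0 < ?z \<bullet> (S *v ?z)" using pd unfolding pos_def_mat_def by blast
  also have "?z \<bullet> (S *v ?z) = x \<bullet> ?z" by (simp add: SPv inner_commute)
  finally show ?thesis .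
qed

lemma g_cont: "continuous_on UNIV (gq (matrix_inv S))"
  unfolding gq_def[abs_def]
  by (intro continuous_intros linear_continuous_on matrix_vector_mul_bounded_linear)

lemma g_meas[measurable]: "gq (matrix_inv S) \<in> borel_measurable borel"
  by (rule borel_measurable_continuous_onI[OF g_cont])

lemma g_pos: "gq P x > 0" by (simp add: gq_def)

lemma g_int: "integrable lborel (gq (matrix_inv S))"
proof -
  obtain l where l: "l > 0" "\<And>x. l * (norm x)^2 \<le> x \<bullet> (matrix_inv S *v x)"
    using coercive[of "matrix_inv S"] Ppos by blast
  have i: "integrable lborel (\<lambda>x::real^'n. exp (- (l/2) * (norm x)^2))"
    using gaussE_integrable[of "l/2"] l by simp
  have m: "gq (matrix_inv S) \<in> borel_measurable lborel" by simp
  have "AE x in lborel. norm (gq (matrix_inv S) x) \<le> norm (exp (- (l/2) * (norm x)^2))"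
    using l(2) by (auto simp: gq_def)
  then show ?thesis by (rule Bochner_Integration.integrable_bound[OF i m])
qed

definition cS :: real where "cS = (\<integral>x. gq (matrix_inv S) x \<partial>lborel)"

lemma cS_pos: "cS > 0"
proof -
  have "0 \<le> cS" unfolding cS_def by (intro integral_nonneg_AE) (simp add: g_pos less_imp_le)
  moreover have "cS \<noteq> 0"
  proof
    assume "cS = 0"
    then have "AE x in lborel. gq (matrix_inv S) x = 0"
      unfolding cS_def using integral_nonneg_eq_0_iff_AE[OF g_int] by (simp add: g_pos less_imp_le)
    then have "AE x::real^'n in lborel. False" by (rule AE_mp) (rule AE_I2, metis g_pos less_irrefl)
    then have "ae_filter (lborel::(real^'n) measure) = bot" by (simp add: trivial_limit_def)
    then show False by (simp add: ae_filter_eq_bot_iff)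
  qed
  ultimately show ?thesis by simp
qed

lemma g_shift:
  "exp (\<tau> * (u \<bullet> x)) * gq (matrix_inv S) x =
     exp (\<tau>^2 * (u \<bullet> (S *v u)) / 2) * gq (matrix_inv S) (- (\<tau> *\<^sub>R (S *v u)) + x)"
proof -
  let ?P = "matrix_inv S"
  let ?a = "\<tau> *\<^sub>R (S *v u)"
  have Pa: "?P *v ?a = \<tau> *\<^sub>R u" by (simp add: matrix_vector_mult_scaleR PSv)
  have SuPx: "(S *v u) \<bullet> (?P *v x) = u \<bullet> x"
    using sym_inner[OF Ssym, of u "?P *v x"] by (simp add: SPv)
  have aPx: "?a \<bullet> (?P *v x) = \<tau> * (u \<bullet> x)"
  proof -
    have "(?P *v ?a) \<bullet> x = ?a \<bullet> (?P *v x)" by (rule sym_inner[OF Psym])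
    then show ?thesis using Pa SuPx by simp
  qed
  have q: "(x - ?a) \<bullet> (?P *v (x - ?a)) = x \<bullet> (?P *v x) - 2 * \<tau> * (u \<bullet> x) + \<tau>^2 * (u \<bullet> (S *v u))"
    using aPx Pa SuPx
    by (simp add: PSv matrix_vector_mult_diff_distrib inner_diff_left inner_diff_right
          inner_commute[of x u] inner_commute[of "S *v u" u] power2_eq_square algebra_simps)
  have xa: "- ?a + x = x - ?a" by simp
  show ?thesis
    unfolding gq_def xa q by (simp add: mult_exp_exp algebra_simps)
qed

lemma expmom:
  "integrable lborel (\<lambda>x. exp (\<tau> * (u \<bullet> x)) * gq (matrix_inv S) x)"
  "(\<integral>x. exp (\<tau> * (u \<bullet> x)) * gq (matrix_inv S) x \<partial>lborel) = exp (\<tau>^2 * (u \<bullet> (S *v u)) / 2) * cS"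
proof -
  let ?c = "- (\<tau> *\<^sub>R (S *v u))"
  have i: "integrable lborel (\<lambda>x. gq (matrix_inv S) (?c + x))"
    using lborel_translate(1)[OF g_meas, of ?c] g_int by simp
  show "integrable lborel (\<lambda>x. exp (\<tau> * (u \<bullet> x)) * gq (matrix_inv S) x)"
    unfolding g_shift using i by simp
  show "(\<integral>x. exp (\<tau> * (u \<bullet> x)) * gq (matrix_inv S) x \<partial>lborel) = exp (\<tau>^2 * (u \<bullet> (S *v u)) / 2) * cS"
    unfolding g_shift cS_def using lborel_translate(2)[OF g_meas, of ?c] by simp
qed


lemma mom2:
  shows "integrable lborel (\<lambda>x. (u \<bullet> x)^2 * gq (matrix_inv S) x)"
    and "(\<integral>x. (u \<bullet> x)^2 * gq (matrix_inv S) x \<partial>lborel) = cS * (u \<bullet> (S *v u))"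
proof -
  let ?g = "gq (matrix_inv S)"
  define E where "E = (\<lambda>t x. exp (t * (u \<bullet> x)) * ?g x)"
  define \<sigma> where "\<sigma> = u \<bullet> (S *v u)"
  define c where "c = cS"
  have c0: "c > 0" using cS_pos by (simp add: c_def)
  have Ei: "integrable lborel (E t)" for t unfolding E_def by (rule expmom(1))
  have EI: "(\<integral>x. E t x \<partial>lborel) = exp (t^2 * \<sigma> / 2) * c" for t
    unfolding E_def \<sigma>_def c_def by (rule expmom(2))
  have gi: "integrable lborel ?g" by (rule g_int)
  have gI: "(\<integral>x. ?g x \<partial>lborel) = c" by (simp add: c_def cS_def)
  have m2: "(\<lambda>x. (u \<bullet> x)^2 * ?g x) \<in> borel_measurable lborel"
  proof -
    have "continuous_on UNIV (\<lambda>x. (u \<bullet> x)^2 * ?g x)"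
      by (intro continuous_intros g_cont)
    then show ?thesis by (simp add: borel_measurable_continuous_onI)
  qed
  show int: "integrable lborel (\<lambda>x. (u \<bullet> x)^2 * ?g x)"
  proof (rule Bochner_Integration.integrable_bound[OF _ m2])
    show "integrable lborel (\<lambda>x. 2 * (E 1 x + E (-1) x))" using Ei by simp
    show "AE x in lborel. norm ((u \<bullet> x)^2 * ?g x) \<le> norm (2 * (E 1 x + E (-1) x))"
    proof (rule AE_I2)
      fix x
      have "0 \<le> (u \<bullet> x)^2 * ?g x" using g_pos[of "matrix_inv S" x] by simp
      moreover have "(u \<bullet> x)^2 * ?g x \<le> 2 * (E 1 x + E (-1) x)"
        unfolding E_def using pw_ineqs(3)[of 1 "?g x" "u \<bullet> x"] g_pos[of "matrix_inv S" x] by simp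
      ultimately show "norm ((u \<bullet> x)^2 * ?g x) \<le> norm (2 * (E 1 x + E (-1) x))" by simp
    qed
  qed
  define M where "M = (\<integral>x. (u \<bullet> x)^2 * ?g x \<partial>lborel)"
  have Iform: "(\<integral>x. (E \<tau> x + E (- \<tau>) x - 2 * ?g x) / \<tau>^2 \<partial>lborel) = 2 * c * (exp (\<tau>^2 * \<sigma> / 2) - 1) / \<tau>^2" for \<tau>
  proof -
    have "(\<integral>x. (E \<tau> x + E (- \<tau>) x - 2 * ?g x) / \<tau>^2 \<partial>lborel) = (\<integral>x. (E \<tau> x + E (- \<tau>) x - 2 * ?g x) \<partial>lborel) / \<tau>^2"
      by (rule integral_divide_zero)
    also have "(\<integral>x. (E \<tau> x + E (- \<tau>) x - 2 * ?g x) \<partial>lborel) = (\<integral>x. E \<tau> x \<partial>lborel) + (\<integral>x. E (- \<tau>) x \<partial>lborel) - 2 * c"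
      using Ei gi gI by simp
    finally show ?thesis unfolding EI by (simp add: algebra_simps)
  qed
  have lo: "c * \<sigma> - 12 * c * exp (2 * \<sigma>) * \<tau>^2 \<le> M" if t: "0 < \<tau>" "\<tau> \<le> 1" for \<tau>
  proof -
    have "(\<integral>x. (E \<tau> x + E (- \<tau>) x - 2 * ?g x) / \<tau>^2 \<partial>lborel) \<le>
          (\<integral>x. (u \<bullet> x)^2 * ?g x + 6 * \<tau>^2 * (E 2 x + E (-2) x) \<partial>lborel)"
    proof (rule integral_mono)
      show "integrable lborel (\<lambda>x. (E \<tau> x + E (- \<tau>) x - 2 * ?g x) / \<tau>^2)" using Ei gi by simp
      show "integrable lborel (\<lambda>x. (u \<bullet> x)^2 * ?g x + 6 * \<tau>^2 * (E 2 x + E (-2) x))" using Ei int by simp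
      fix x
      show "(E \<tau> x + E (- \<tau>) x - 2 * ?g x) / \<tau>^2 \<le> (u \<bullet> x)^2 * ?g x + 6 * \<tau>^2 * (E 2 x + E (-2) x)"
        unfolding E_def using pw_ineqs(2)[OF t, of "?g x" "u \<bullet> x"] g_pos[of "matrix_inv S" x] by simp
    qed
    also have "\<dots> = M + 6 * \<tau>^2 * (2 * c * exp (2 * \<sigma>))"
      using Ei int by (simp add: M_def EI)
    finally have A: "2 * c * (exp (\<tau>^2 * \<sigma> / 2) - 1) / \<tau>^2 \<le> M + 12 * c * exp (2 * \<sigma>) * \<tau>^2"
      unfolding Iform by (simp add: algebra_simps)
    have "\<tau>^2 * \<sigma> / 2 \<le> exp (\<tau>^2 * \<sigma> / 2) - 1" using exp_ge_add_one_self[of "\<tau>^2 * \<sigma> / 2"] by linarith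
    then have "2 * c * (\<tau>^2 * \<sigma> / 2) \<le> 2 * c * (exp (\<tau>^2 * \<sigma> / 2) - 1)" using c0 by simp
    then have "c * \<sigma> \<le> 2 * c * (exp (\<tau>^2 * \<sigma> / 2) - 1) / \<tau>^2" using t by (simp add: field_simps)
    then show ?thesis using A by simp
  qed
  have hi: "M \<le> c * \<sigma> * exp (\<sigma> / 2 * \<tau>^2)" if t: "0 < \<tau>" "\<tau> \<le> 1" for \<tau>
  proof -
    have "M \<le> (\<integral>x. (E \<tau> x + E (- \<tau>) x - 2 * ?g x) / \<tau>^2 \<partial>lborel)"
      unfolding M_def
    proof (rule integral_mono)
      show "integrable lborel (\<lambda>x. (E \<tau> x + E (- \<tau>) x - 2 * ?g x) / \<tau>^2)" using Ei gi by simp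
      show "integrable lborel (\<lambda>x. (u \<bullet> x)^2 * ?g x)" by (rule int)
      fix x
      show "(u \<bullet> x)^2 * ?g x \<le> (E \<tau> x + E (- \<tau>) x - 2 * ?g x) / \<tau>^2"
        unfolding E_def using pw_ineqs(1)[OF t, of "?g x" "u \<bullet> x"] g_pos[of "matrix_inv S" x] by simp
    qed
    also have "\<dots> = 2 * c * (exp (\<tau>^2 * \<sigma> / 2) - 1) / \<tau>^2" by (rule Iform)
    also have "\<dots> \<le> c * \<sigma> * exp (\<sigma> / 2 * \<tau>^2)"
    proof -
      let ?w = "\<tau>^2 * \<sigma> / 2"
      have "1 - ?w \<le> exp (- ?w)" using exp_ge_add_one_self[of "- ?w"] by simp
      then have "exp ?w * (1 - ?w) \<le> exp ?w * exp (- ?w)" by (intro mult_left_mono) auto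
      then have "exp ?w - 1 \<le> ?w * exp ?w" by (simp add: exp_minus field_simps)
      then have "2 * c * (exp ?w - 1) \<le> 2 * c * (?w * exp ?w)" using c0 by simp
      then show ?thesis using t by (simp add: field_simps)
    qed
    finally show ?thesis .
  qed
  have "M = c * \<sigma>"
    by (rule squeeze_lim[of "c * \<sigma>" "12 * c * exp (2 * \<sigma>)" M "\<sigma> / 2"]) (use lo hi in auto)
  then show "(\<integral>x. (u \<bullet> x)^2 * gq (matrix_inv S) x \<partial>lborel) = cS * (u \<bullet> (S *v u))"
    by (simp add: M_def c_def \<sigma>_def)
qed

lemma mom:
  shows "integrable lborel (\<lambda>x. (u \<bullet> x) * (w \<bullet> x) * gq (matrix_inv S) x)"
    and "(\<integral>x. (u \<bullet> x) * (w \<bullet> x) * gq (matrix_inv S) x \<partial>lborel) = cS * (u \<bullet> (S *v w))"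
proof -
  let ?g = "gq (matrix_inv S)"
  have eq: "(u \<bullet> x) * (w \<bullet> x) * ?g x = (((u + w) \<bullet> x)^2 * ?g x - ((u - w) \<bullet> x)^2 * ?g x) / 4" for x
    by (simp add: inner_add_left inner_diff_left power2_eq_square algebra_simps)
  show "integrable lborel (\<lambda>x. (u \<bullet> x) * (w \<bullet> x) * ?g x)"
    unfolding eq using mom2(1)[of "u + w"] mom2(1)[of "u - w"] by simp
  have sw: "w \<bullet> (S *v u) = u \<bullet> (S *v w)"
    using sym_inner[OF Ssym, of w u] by (simp add: inner_commute)
  have "(\<integral>x. (u \<bullet> x) * (w \<bullet> x) * ?g x \<partial>lborel) = (cS * ((u + w) \<bullet> (S *v (u + w))) - cS * ((u - w) \<bullet> (S *v (u - w)))) / 4"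
    unfolding eq using mom2[of "u + w"] mom2[of "u - w"] by simp
  also have "\<dots> = cS * (u \<bullet> (S *v w))"
    using sw by (simp add: matrix_vector_right_distrib matrix_vector_mult_diff_distrib inner_add_left inner_add_right
        inner_diff_left inner_diff_right algebra_simps)
  finally show "(\<integral>x. (u \<bullet> x) * (w \<bullet> x) * ?g x \<partial>lborel) = cS * (u \<bullet> (S *v w))" .
qed

end

definition tr2 :: "real^'n^'n \<Rightarrow> real^'n^'n \<Rightarrow> real^'n^'n \<Rightarrow> real" where
  "tr2 S A B = (\<Sum>i\<in>UNIV. A$i \<bullet> (S *v B$i))"

lemma trace_tr2: "trace (S ** (transpose A ** B)) = tr2 S B A"
proof -
  have "trace (S ** (transpose A ** B)) = (\<Sum>k\<in>UNIV. \<Sum>l\<in>UNIV. \<Sum>i\<in>UNIV. S$k$l * A$i$l * B$i$k)"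
    by (simp add: trace_def matrix_matrix_mult_def transpose_def sum_distrib_left mult_ac)
  also have "\<dots> = (\<Sum>k\<in>UNIV. \<Sum>i\<in>UNIV. \<Sum>l\<in>UNIV. S$k$l * A$i$l * B$i$k)"
    by (rule sum.cong[OF refl]) (rule sum.swap)
  also have "\<dots> = (\<Sum>i\<in>UNIV. \<Sum>k\<in>UNIV. \<Sum>l\<in>UNIV. S$k$l * A$i$l * B$i$k)"
    by (rule sum.swap)
  also have "\<dots> = tr2 S B A"
    by (simp add: tr2_def inner_vec_def matrix_vector_mult_def sum_distrib_left mult_ac)
  finally show ?thesis .
qed

lemma tr2_sym: "transpose S = S \<Longrightarrow> tr2 S A B = tr2 S B A"
  unfolding tr2_def by (intro sum.cong refl) (metis sym_inner inner_commute)

lemma mv_row: "((A::real^'n^'m) *v x) $ i = A$i \<bullet> x"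
  by (simp add: matrix_vector_mult_def inner_vec_def)

lemma inner_mv_sum: "((A::real^'n^'m) *v x) \<bullet> (B *v x) = (\<Sum>i\<in>UNIV. (A$i \<bullet> x) * (B$i \<bullet> x))"
  by (simp only: inner_vec_def[of "A *v x" "B *v x"] mv_row inner_real_def)

definition gK :: "real^'n^'n \<Rightarrow> real" where
  "gK S = (2 * pi) powr (- real CARD('n) / 2) * det S powr (- 1 / 2)"

lemma gauss_gq: "gauss_density S x = gK S * gq (matrix_inv S) x"
  by (simp add: gauss_density_def gK_def gq_def)

lemma gK_pos: "pos_def_mat S \<Longrightarrow> gK S > 0"
  using pd_det_pos[of S] by (simp add: gK_def)

lemma Gint:
  assumes pd: "pos_def_mat (S::real^'n^'n)"
  shows "(\<integral>x. ((A *v x) \<bullet> (B *v x)) * gauss_density S x \<partial>lborel) = gK S * cS S * tr2 S A B"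
proof -
  have "(\<integral>x. ((A *v x) \<bullet> (B *v x)) * gauss_density S x \<partial>lborel)
      = (\<integral>x. gK S * (\<Sum>i\<in>UNIV. (A$i \<bullet> x) * (B$i \<bullet> x) * gq (matrix_inv S) x) \<partial>lborel)"
    by (simp add: inner_mv_sum gauss_gq sum_distrib_left sum_distrib_right mult_ac)
  also have "\<dots> = gK S * (\<Sum>i\<in>UNIV. (\<integral>x. (A$i \<bullet> x) * (B$i \<bullet> x) * gq (matrix_inv S) x \<partial>lborel))"
    using mom(1)[OF pd] by (simp add: integral_sum)
  also have "\<dots> = gK S * (\<Sum>i\<in>UNIV. cS S * (A$i \<bullet> (S *v B$i)))"
    using mom(2)[OF pd] by simp
  finally show ?thesis by (simp add: tr2_def sum_distrib_left mult.assoc)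
qed

lemma trace_scaleR: "trace (c *\<^sub>R (M::real^'n^'n)) = c * trace M"
  by (simp add: trace_def sum_distrib_left)

lemma trace_transpose': "trace (transpose (M::real^'n^'n)) = trace M"
  by (simp add: trace_def transpose_def)

lemma qf_vderiv:
  fixes F :: "real \<Rightarrow> real^'n^'n"
  assumes "(F has_vector_derivative F') (at s within T)"
  shows "((\<lambda>s'. x \<bullet> (F s' *v x)) has_real_derivative x \<bullet> (F' *v x)) (at s within T)"
proof -
  have "linear (\<lambda>M::real^'n^'n. x \<bullet> (M *v x))"
    by (rule linearI) (simp_all add: matrix_vector_mult_add_rdistrib inner_add_right
        scaleR_matrix_vector_assoc[symmetric])
  then have bl: "bounded_linear (\<lambda>M::real^'n^'n. x \<bullet> (M *v x))"
    by (simp add: linear_conv_bounded_linear)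
  have "(F has_derivative (\<lambda>h. h *\<^sub>R F')) (at s within T)"
    using assms by (simp add: has_vector_derivative_def)
  from has_derivative_compose[OF this bounded_linear_imp_has_derivative[OF bl]]
  have "((\<lambda>s'. x \<bullet> (F s' *v x)) has_derivative (\<lambda>h. x \<bullet> ((h *\<^sub>R F') *v x))) (at s within T)" .
  moreover have "(\<lambda>h. x \<bullet> ((h *\<^sub>R F') *v x)) = (*) (x \<bullet> (F' *v x))"
    by (rule ext) (simp add: scaleR_matrix_vector_assoc[symmetric])
  ultimately show ?thesis by (simp add: has_field_derivative_def)
qed

lemma det_vderiv:
  fixes F :: "real \<Rightarrow> real^'n^'n"
  assumes d: "(F has_vector_derivative F') (at s within T)" and inv: "invertible (F s)"
  shows "((\<lambda>s'. det (F s')) has_real_derivative det (F s) * trace (matrix_inv (F s) ** F')) (at s within T)"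
proof -
  have "(F has_derivative (\<lambda>h. h *\<^sub>R F')) (at s within T)"
    using d by (simp add: has_vector_derivative_def)
  from has_derivative_compose[OF this det_has_derivative[OF inv]]
  have "((\<lambda>s'. det (F s')) has_derivative (\<lambda>h. det (F s) * trace (matrix_inv (F s) ** (h *\<^sub>R F')))) (at s within T)" .
  moreover have "(\<lambda>h. det (F s) * trace (matrix_inv (F s) ** (h *\<^sub>R F'))) = (*) (det (F s) * trace (matrix_inv (F s) ** F'))"
    by (rule ext) (simp add: matrix_mul_scaleR_right trace_scaleR)
  ultimately show ?thesis by (simp add: has_field_derivative_def)
qed

lemma rho_cont_eq:
  fixes F :: "real \<Rightarrow> real^'n^'n"
  assumes d: "(F has_vector_derivative (F s ** transpose A + A ** F s)) (at s within T)"
      and pd: "pos_def_mat (F s)"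
  shows "\<exists>D L. ((\<lambda>s'. gauss_density (F s') x) has_real_derivative D) (at s within T) \<and>
        ((\<lambda>y. gauss_density (F s) y *\<^sub>R (A *v y)) has_derivative L) (at x) \<and> D + div_lin L = 0"
proof -
  define S where "S = F s"
  define P where "P = matrix_inv S"
  define F' where "F' = S ** transpose A + A ** S"
  have d': "(F has_vector_derivative F') (at s within T)" using d by (simp add: F'_def S_def)
  have pdS: "pos_def_mat S" using pd by (simp add: S_def)
  have inv: "invertible S" using Sinv[OF pdS] .
  have PS': "P ** S = mat 1" using PS[OF pdS] by (simp add: P_def)
  have SP': "S ** P = mat 1" using SP[OF pdS] by (simp add: P_def)
  have Ps: "transpose P = P" using Psym[OF pdS] by (simp add: P_def)
  have detpos: "det S > 0" using pd_det_pos[OF pdS] .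
  define c0 where "c0 = (2 * pi) powr (- real CARD('n) / 2)"
  define q where "q = (\<lambda>s'. x \<bullet> (matrix_inv (F s') *v x))"
  define a where "a = (A *v x) \<bullet> (P *v x)"
  have rho_eq: "gauss_density (F s') x = c0 * det (F s') powr (- 1 / 2) * exp (- (1/2) * q s')" for s'
    by (simp add: gauss_density_def c0_def q_def)
  have tr: "trace (P ** F') = 2 * trace A"
  proof -
    have "P ** F' = transpose A + P ** A ** S"
      by (simp add: F'_def matrix_add_ldistrib matrix_mul_assoc PS' matrix_mul_lid)
    moreover have "trace (P ** A ** S) = trace A"
    proof -
      have e1: "S ** (P ** A) = A" by (simp add: matrix_mul_assoc SP' matrix_mul_lid)
      show ?thesis by (metis e1 trace_mul_sym)
    qed
    ultimately show ?thesis by (simp add: trace_add trace_transpose')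
  qed
  have qv: "x \<bullet> (P *v (F' *v (P *v x))) = 2 * a"
  proof -
    have Sy: "S *v (P *v x) = x" by (metis SP' matrix_vector_mul_assoc matrix_vector_mul_lid)
    have "P *v (F' *v (P *v x)) = transpose A *v (P *v x) + P *v (A *v x)"
      by (simp add: F'_def matrix_vector_mult_add_rdistrib matrix_vector_right_distrib
          matrix_vector_mul_assoc[symmetric] PS' Sy)
      (metis PS' matrix_vector_mul_assoc matrix_vector_mul_lid)
    moreover have "x \<bullet> (transpose A *v (P *v x)) = a"
      unfolding a_def by (rule mv_inner_transpose[symmetric])
    moreover have "x \<bullet> (P *v (A *v x)) = a"
      unfolding a_def using sym_inner[OF Ps, of x "A *v x"] by (simp add: inner_commute)
    ultimately show ?thesis by (simp add: inner_add_right)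
  qed
  have dd: "((\<lambda>s'. det (F s')) has_real_derivative det S * (2 * trace A)) (at s within T)"
    using det_vderiv[OF d', of] inv tr by (simp add: S_def P_def)
  have dp: "((\<lambda>s'. det (F s') powr (- 1 / 2)) has_real_derivative
        (- 1 / 2) * det S powr (- 1 / 2 - 1) * (det S * (2 * trace A))) (at s within T)"
    unfolding S_def by (rule DERIV_chain2[OF has_real_derivative_powr[OF detpos[unfolded S_def], of "- 1 / 2"] dd[unfolded S_def]])
  have dq: "(q has_real_derivative - (2 * a)) (at s within T)"
    using inv_quad_deriv[OF d', of x] inv qv unfolding q_def by (simp add: S_def P_def)
  have de: "((\<lambda>s'. exp (- (1/2) * q s')) has_real_derivative exp (- (1/2) * q s) * (- (1/2) * - (2 * a))) (at s within T)"
    by (rule DERIV_chain2[OF DERIV_exp DERIV_cmult[OF dq]])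
  have dr: "((\<lambda>s'. c0 * det (F s') powr (- 1 / 2) * exp (- (1/2) * q s')) has_real_derivative
       c0 * ((- 1 / 2) * det S powr (- 1 / 2 - 1) * (det S * (2 * trace A))) * exp (- (1/2) * q s)
       + exp (- (1/2) * q s) * (- (1/2) * - (2 * a)) * (c0 * det S powr (- 1 / 2))) (at s within T)"
    unfolding S_def by (rule DERIV_mult[OF DERIV_cmult[OF dp[unfolded S_def]] de])
  define rx where "rx = gauss_density S x"
  have rx: "rx = c0 * det S powr (- 1 / 2) * exp (- (1/2) * q s)"
    unfolding rx_def S_def by (rule rho_eq)
  have pw: "det S powr (- 1 / 2 - 1) * det S = det S powr (- 1 / 2)"
  proof -
    have "det S powr (- 1 / 2 - 1) * det S powr 1 = det S powr (- 1 / 2 - 1 + 1)" by (rule powr_add[symmetric])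
    then show ?thesis using detpos by simp
  qed
  define D where "D = rx * (- trace A + a)"
  have DD: "c0 * ((- 1 / 2) * det S powr (- 1 / 2 - 1) * (det S * (2 * trace A))) * exp (- (1/2) * q s)
       + exp (- (1/2) * q s) * (- (1/2) * - (2 * a)) * (c0 * det S powr (- 1 / 2)) = D"
    unfolding D_def rx
  proof -
    have hX: "(- 1 / 2) * det S powr (- 1 / 2 - 1) * (det S * (2 * trace A)) = - (det S powr (- 1 / 2) * trace A)"
    proof -
      have "(- 1 / 2) * det S powr (- 1 / 2 - 1) * (det S * (2 * trace A)) = - ((det S powr (- 1 / 2 - 1) * det S) * trace A)"
        by (simp add: algebra_simps)
      then show ?thesis unfolding pw .
    qed
    show "c0 * ((- 1 / 2) * det S powr (- 1 / 2 - 1) * (det S * (2 * trace A))) * exp (- (1/2) * q s)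
       + exp (- (1/2) * q s) * (- (1/2) * - (2 * a)) * (c0 * det S powr (- 1 / 2)) =
       c0 * det S powr (- 1 / 2) * exp (- (1/2) * q s) * (- trace A + a)"
      unfolding hX by (simp add: algebra_simps)
  qed
  have Dder: "((\<lambda>s'. gauss_density (F s') x) has_real_derivative D) (at s within T)"
    using dr unfolding DD rho_eq[symmetric] .
  have quad: "((\<lambda>y. y \<bullet> (P *v y)) has_derivative (\<lambda>h. 2 * ((P *v x) \<bullet> h))) (at x)"
  proof -
    have "((\<lambda>y. y \<bullet> (P *v y)) has_derivative (\<lambda>h. x \<bullet> (P *v h) + h \<bullet> (P *v x))) (at x)"
      by (intro has_derivative_inner has_derivative_ident bounded_linear_imp_has_derivative
          matrix_vector_mul_bounded_linear)
    moreover have "(\<lambda>h. x \<bullet> (P *v h) + h \<bullet> (P *v x)) = (\<lambda>h. 2 * ((P *v x) \<bullet> h))"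
      by (rule ext) (metis sym_inner[OF Ps] inner_commute mult_2)
    ultimately show ?thesis by simp
  qed
  define k where "k = c0 * det S powr (- 1 / 2)"
  have gd: "gauss_density S y = k * exp (- (1/2) * (y \<bullet> (P *v y)))" for y
    by (simp add: gauss_density_def k_def c0_def P_def)
  have rx2: "rx = k * exp (- (1/2) * (x \<bullet> (P *v x)))" by (simp add: rx_def gd)
  have "((\<lambda>y. exp (- (1/2) * (y \<bullet> (P *v y)))) has_derivative
        (\<lambda>h. - (1/2) * (2 * ((P *v x) \<bullet> h)) * exp (- (1/2) * (x \<bullet> (P *v x))))) (at x)"
    by (rule DERIV_compose_FDERIV[OF DERIV_exp has_derivative_mult_right[OF quad]])
  then have "((\<lambda>y. k * exp (- (1/2) * (y \<bullet> (P *v y)))) has_derivative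
        (\<lambda>h. k * (- (1/2) * (2 * ((P *v x) \<bullet> h)) * exp (- (1/2) * (x \<bullet> (P *v x)))))) (at x)"
    by (rule has_derivative_mult_right)
  then have gdd: "(gauss_density S has_derivative (\<lambda>h. - (rx * ((P *v x) \<bullet> h)))) (at x)"
    unfolding gd[abs_def] rx2 by (simp add: algebra_simps)
  define L where "L = (\<lambda>h. gauss_density S x *\<^sub>R (A *v h) + (- (rx * ((P *v x) \<bullet> h))) *\<^sub>R (A *v x))"
  have Lder: "((\<lambda>y. gauss_density S y *\<^sub>R (A *v y)) has_derivative L) (at x)"
    unfolding L_def
    by (rule has_derivative_scaleR[OF gdd bounded_linear_imp_has_derivative[OF matrix_vector_mul_bounded_linear]])
  have "div_lin L = rx * trace A - rx * a"
  proof -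
    have "div_lin L = (\<Sum>i\<in>UNIV. rx * A$i$i - rx * ((P *v x)$i * (A *v x)$i))"
      unfolding div_lin_def L_def rx_def
      by (intro sum.cong refl) (simp add: matrix_vector_mult_basis column_def inner_axis)
    also have "\<dots> = rx * trace A - rx * a"
      by (simp add: sum_subtractf sum_distrib_left trace_def a_def inner_vec_def mult_ac)
    finally show ?thesis .
  qed
  then have "D + div_lin L = 0" by (simp add: D_def algebra_simps)
  then show ?thesis using Dder Lder by (auto simp: S_def)
qed

lemma grad_quad:
  assumes "transpose M = (M::real^'n^'n)"
  shows "GDERIV (\<lambda>x. x \<bullet> (M *v x)) x :> 2 *\<^sub>R (M *v x)"
proof -
  have "((\<lambda>x. x \<bullet> (M *v x)) has_derivative (\<lambda>h. x \<bullet> (M *v h) + h \<bullet> (M *v x))) (at x)"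
    by (intro has_derivative_inner has_derivative_ident bounded_linear_imp_has_derivative
        matrix_vector_mul_bounded_linear)
  moreover have "(\<lambda>h. x \<bullet> (M *v h) + h \<bullet> (M *v x)) = (\<lambda>h. h \<bullet> (2 *\<^sub>R (M *v x)))"
    by (rule ext) (metis sym_inner[OF assms] inner_commute inner_scaleR_right mult_2 scaleR_2 inner_add_right)
  ultimately show ?thesis unfolding gderiv_def by simp
qed

lemma inv_cancel: "(k::real) \<noteq> 0 \<Longrightarrow> inverse (k * J) * k = inverse J"
  by (cases "J = 0") (auto simp: field_simps)

lemma qf_lin:
  fixes x :: "real^'n"
  shows "x \<bullet> ((M + N) *v x) = x \<bullet> (M *v x) + x \<bullet> (N *v x)"
    and "x \<bullet> ((M - N) *v x) = x \<bullet> (M *v x) - x \<bullet> (N *v x)"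
    and "x \<bullet> ((c *\<^sub>R M) *v x) = c * (x \<bullet> (M *v x))"
    and "x \<bullet> ((transpose A ** B) *v x) = (A *v x) \<bullet> (B *v x)"
  by (simp_all add: matrix_vector_mult_add_rdistrib matrix_vector_mult_diff_rdistrib inner_add_right inner_diff_right
      scaleR_matrix_vector_assoc[symmetric] matrix_vector_mul_assoc[symmetric] mv_inner_transpose)

theorem mainTheorem8:
  fixes Sig As At Ss St :: "real \<Rightarrow> real \<Rightarrow> real^'n^'n"
  defines "Tss \<equiv> \<lambda>s t. trace (Sig s t ** (transpose (As s t) ** As s t))"
      and "Ttt \<equiv> \<lambda>s t. trace (Sig s t ** (transpose (At s t) ** At s t))"
      and "Tst \<equiv> \<lambda>s t. trace (Sig s t ** (transpose (As s t) ** At s t + transpose (At s t) ** As s t))"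
  defines "J \<equiv> \<lambda>s t. sqrt (Tss s t * Ttt s t - ((1/2) * Tst s t)\<^sup>2)"
      and "rho \<equiv> \<lambda>s t x. gauss_density (Sig s t) x"
      and "vs \<equiv> \<lambda>s t x. As s t *v x"
      and "vt \<equiv> \<lambda>s t x. At s t *v x"
      and "Phis \<equiv> \<lambda>s t x. x \<bullet> (Ss s t *v x)"
      and "Phit \<equiv> \<lambda>s t x. x \<bullet> (St s t *v x)"
  defines "Iss \<equiv> \<lambda>s t. LINT x|lborel. (norm (vs s t x))\<^sup>2 * rho s t x"
      and "Itt \<equiv> \<lambda>s t. LINT x|lborel. (norm (vt s t x))\<^sup>2 * rho s t x"
      and "Ist \<equiv> \<lambda>s t. LINT x|lborel. (vs s t x \<bullet> vt s t x) * rho s t x"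
  defines "Aa \<equiv> \<lambda>s t. sqrt (Iss s t * Itt s t - (Ist s t)\<^sup>2)"
  assumes pd: "\<forall>s\<in>{0..1}. \<forall>t\<in>{0..1}. pos_def_mat (Sig s t)"
      and sym_s: "\<forall>s\<in>{0..1}. \<forall>t\<in>{0..1}. transpose (Ss s t) = Ss s t"
      and sym_t: "\<forall>s\<in>{0..1}. \<forall>t\<in>{0..1}. transpose (St s t) = St s t"
      and eq_s: "\<forall>s\<in>{0..1}. \<forall>t\<in>{0..1}.
        inverse (J s t) *\<^sub>R (Ttt s t *\<^sub>R As s t - ((1/2) * Tst s t) *\<^sub>R At s t) = 2 *\<^sub>R Ss s t"
      and eq_t: "\<forall>s\<in>{0..1}. \<forall>t\<in>{0..1}.
        inverse (J s t) *\<^sub>R (Tss s t *\<^sub>R At s t - ((1/2) * Tst s t) *\<^sub>R As s t) = 2 *\<^sub>R St s t"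
      and eq_S: "\<forall>s\<in>{0..1}. \<forall>t\<in>{0..1}. \<exists>Ds Dt.
        ((\<lambda>s'. Ss s' t) has_vector_derivative Ds) (at s within {0..1}) \<and>
        ((\<lambda>t'. St s t') has_vector_derivative Dt) (at t within {0..1}) \<and>
        Ds + Dt + ((1/2) * inverse (J s t)) *\<^sub>R
          (Ttt s t *\<^sub>R (transpose (As s t) ** As s t) + Tss s t *\<^sub>R (transpose (At s t) ** At s t)
           - ((1/2) * Tst s t) *\<^sub>R (transpose (As s t) ** At s t + transpose (At s t) ** As s t)) = 0"
      and dSig_s: "\<forall>s\<in>{0..1}. \<forall>t\<in>{0..1}.
        ((\<lambda>s'. Sig s' t) has_vector_derivative (Sig s t ** transpose (As s t) + As s t ** Sig s t))
          (at s within {0..1})"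
      and dSig_t: "\<forall>s\<in>{0..1}. \<forall>t\<in>{0..1}.
        ((\<lambda>t'. Sig s t') has_vector_derivative (Sig s t ** transpose (At s t) + At s t ** Sig s t))
          (at t within {0..1})"
  shows "\<forall>s\<in>{0..1}. \<forall>t\<in>{0..1}. \<forall>x::real^'n.
     (GDERIV (Phis s t) x :> inverse (Aa s t) *\<^sub>R (Itt s t *\<^sub>R vs s t x - Ist s t *\<^sub>R vt s t x)) \<and>
     (GDERIV (Phit s t) x :> inverse (Aa s t) *\<^sub>R (Iss s t *\<^sub>R vt s t x - Ist s t *\<^sub>R vs s t x)) \<and>
     (\<exists>Ds Dt.
        ((\<lambda>s'. Phis s' t x) has_real_derivative Ds) (at s within {0..1}) \<and>
        ((\<lambda>t'. Phit s t' x) has_real_derivative Dt) (at t within {0..1}) \<and>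
        Ds + Dt + inverse (Aa s t) *
          ((1/2) * (norm (vs s t x))\<^sup>2 * Itt s t + (1/2) * (norm (vt s t x))\<^sup>2 * Iss s t
           - (vt s t x \<bullet> vs s t x) * Ist s t) = 0) \<and>
     (\<exists>D L. ((\<lambda>s'. rho s' t x) has_real_derivative D) (at s within {0..1}) \<and>
        ((\<lambda>y. rho s t y *\<^sub>R vs s t y) has_derivative L) (at x) \<and> D + div_lin L = 0) \<and>
     (\<exists>D L. ((\<lambda>t'. rho s t' x) has_real_derivative D) (at t within {0..1}) \<and>
        ((\<lambda>y. rho s t y *\<^sub>R vt s t y) has_derivative L) (at x) \<and> D + div_lin L = 0)"
proof (intro ballI allI)
  fix s t :: real and x :: "real^'n"
  assume s: "s \<in> {0..1}" and t: "t \<in> {0..1}"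
  define S where "S = Sig s t"
  have pdS: "pos_def_mat S" using pd s t by (simp add: S_def)
  define k where "k = gK S * cS S"
  have k0: "k > 0" using gK_pos[OF pdS] cS_pos[OF pdS] by (simp add: k_def)
  have Ssy: "transpose S = S" using Ssym[OF pdS] .
  have G: "(\<integral>y. ((A *v y) \<bullet> (B *v y)) * rho s t y \<partial>lborel) = k * tr2 S A B" for A B
    using Gint[OF pdS, of A B] by (simp add: rho_def S_def k_def)
  have hIss: "Iss s t = k * Tss s t"
  proof -
    have "Iss s t = (\<integral>y. ((As s t *v y) \<bullet> (As s t *v y)) * rho s t y \<partial>lborel)"
      by (simp add: Iss_def vs_def power2_norm_eq_inner)
    also have "\<dots> = k * tr2 S (As s t) (As s t)" by (rule G)
    also have "tr2 S (As s t) (As s t) = Tss s t" by (simp add: Tss_def trace_tr2 S_def)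
    finally show ?thesis .
  qed
  have hItt: "Itt s t = k * Ttt s t"
  proof -
    have "Itt s t = (\<integral>y. ((At s t *v y) \<bullet> (At s t *v y)) * rho s t y \<partial>lborel)"
      by (simp add: Itt_def vt_def power2_norm_eq_inner)
    also have "\<dots> = k * tr2 S (At s t) (At s t)" by (rule G)
    also have "tr2 S (At s t) (At s t) = Ttt s t" by (simp add: Ttt_def trace_tr2 S_def)
    finally show ?thesis .
  qed
  have hIst: "Ist s t = k * ((1/2) * Tst s t)"
  proof -
    have "Ist s t = (\<integral>y. ((As s t *v y) \<bullet> (At s t *v y)) * rho s t y \<partial>lborel)"
      by (simp add: Ist_def vs_def vt_def)
    also have "\<dots> = k * tr2 S (As s t) (At s t)" by (rule G)
    also have "tr2 S (As s t) (At s t) = (1/2) * Tst s t"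
    proof -
      have "Tst s t = trace (S ** (transpose (As s t) ** At s t)) + trace (S ** (transpose (At s t) ** As s t))"
        by (simp add: Tst_def S_def matrix_add_ldistrib trace_add)
      also have "\<dots> = tr2 S (At s t) (As s t) + tr2 S (As s t) (At s t)" by (simp add: trace_tr2)
      also have "\<dots> = 2 * tr2 S (As s t) (At s t)" using tr2_sym[OF Ssy] by simp
      finally show ?thesis by simp
    qed
    finally show ?thesis .
  qed
  have hAa: "Aa s t = k * J s t"
  proof -
    have "Iss s t * Itt s t - (Ist s t)\<^sup>2 = k^2 * (Tss s t * Ttt s t - ((1/2) * Tst s t)\<^sup>2)"
      by (simp add: hIss hItt hIst power2_eq_square algebra_simps)
    then have "Aa s t = sqrt (k^2) * J s t" by (simp add: Aa_def J_def real_sqrt_mult)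
    then show ?thesis using k0 by simp
  qed
  have knz: "k \<noteq> 0" using k0 by simp
  have P1: "GDERIV (Phis s t) x :> inverse (Aa s t) *\<^sub>R (Itt s t *\<^sub>R vs s t x - Ist s t *\<^sub>R vt s t x)"
  proof -
    have symS: "transpose (Ss s t) = Ss s t" using sym_s s t by blast
    have gd: "GDERIV (Phis s t) x :> 2 *\<^sub>R (Ss s t *v x)"
      using grad_quad[OF symS, of x] by (simp add: Phis_def)
    have e: "inverse (J s t) *\<^sub>R (Ttt s t *\<^sub>R As s t - ((1/2) * Tst s t) *\<^sub>R At s t) = 2 *\<^sub>R Ss s t"
      using eq_s s t by blast
    have ev: "inverse (J s t) *\<^sub>R (Ttt s t *\<^sub>R (As s t *v x) - ((1/2) * Tst s t) *\<^sub>R (At s t *v x)) = 2 *\<^sub>R (Ss s t *v x)"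
      using arg_cong[OF e, of "\<lambda>M. M *v x"]
      by (simp add: matrix_vector_mult_diff_rdistrib scaleR_matrix_vector_assoc[symmetric])
    have "Itt s t *\<^sub>R vs s t x - Ist s t *\<^sub>R vt s t x = k *\<^sub>R (Ttt s t *\<^sub>R (As s t *v x) - ((1/2) * Tst s t) *\<^sub>R (At s t *v x))"
      by (simp add: hItt hIst vs_def vt_def scaleR_diff_right)
    then have "inverse (Aa s t) *\<^sub>R (Itt s t *\<^sub>R vs s t x - Ist s t *\<^sub>R vt s t x) =
        (inverse (k * J s t) * k) *\<^sub>R (Ttt s t *\<^sub>R (As s t *v x) - ((1/2) * Tst s t) *\<^sub>R (At s t *v x))"
      by (simp only: hAa scaleR_scaleR)
    then have "inverse (Aa s t) *\<^sub>R (Itt s t *\<^sub>R vs s t x - Ist s t *\<^sub>R vt s t x) = 2 *\<^sub>R (Ss s t *v x)"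
      unfolding inv_cancel[OF knz] ev .
    then show ?thesis using gd by simp
  qed
  have P2: "GDERIV (Phit s t) x :> inverse (Aa s t) *\<^sub>R (Iss s t *\<^sub>R vt s t x - Ist s t *\<^sub>R vs s t x)"
  proof -
    have symS: "transpose (St s t) = St s t" using sym_t s t by blast
    have gd: "GDERIV (Phit s t) x :> 2 *\<^sub>R (St s t *v x)"
      using grad_quad[OF symS, of x] by (simp add: Phit_def)
    have e: "inverse (J s t) *\<^sub>R (Tss s t *\<^sub>R At s t - ((1/2) * Tst s t) *\<^sub>R As s t) = 2 *\<^sub>R St s t"
      using eq_t s t by blast
    have ev: "inverse (J s t) *\<^sub>R (Tss s t *\<^sub>R (At s t *v x) - ((1/2) * Tst s t) *\<^sub>R (As s t *v x)) = 2 *\<^sub>R (St s t *v x)"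
      using arg_cong[OF e, of "\<lambda>M. M *v x"]
      by (simp add: matrix_vector_mult_diff_rdistrib scaleR_matrix_vector_assoc[symmetric])
    have "Iss s t *\<^sub>R vt s t x - Ist s t *\<^sub>R vs s t x = k *\<^sub>R (Tss s t *\<^sub>R (At s t *v x) - ((1/2) * Tst s t) *\<^sub>R (As s t *v x))"
      by (simp add: hIss hIst vs_def vt_def scaleR_diff_right)
    then have "inverse (Aa s t) *\<^sub>R (Iss s t *\<^sub>R vt s t x - Ist s t *\<^sub>R vs s t x) =
        (inverse (k * J s t) * k) *\<^sub>R (Tss s t *\<^sub>R (At s t *v x) - ((1/2) * Tst s t) *\<^sub>R (As s t *v x))"
      by (simp only: hAa scaleR_scaleR)
    then have "inverse (Aa s t) *\<^sub>R (Iss s t *\<^sub>R vt s t x - Ist s t *\<^sub>R vs s t x) = 2 *\<^sub>R (St s t *v x)"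
      unfolding inv_cancel[OF knz] ev .
    then show ?thesis using gd by simp
  qed
  obtain DS DT where DS: "((\<lambda>s'. Ss s' t) has_vector_derivative DS) (at s within {0..1})"
      and DT: "((\<lambda>t'. St s t') has_vector_derivative DT) (at t within {0..1})"
      and sumeq: "DS + DT + ((1/2) * inverse (J s t)) *\<^sub>R
          (Ttt s t *\<^sub>R (transpose (As s t) ** As s t) + Tss s t *\<^sub>R (transpose (At s t) ** At s t)
           - ((1/2) * Tst s t) *\<^sub>R (transpose (As s t) ** At s t + transpose (At s t) ** As s t)) = 0"
    using eq_S s t by blast
  have dPs: "((\<lambda>s'. Phis s' t x) has_real_derivative x \<bullet> (DS *v x)) (at s within {0..1})"
    using qf_vderiv[OF DS, of x] by (simp add: Phis_def)
  have dPt: "((\<lambda>t'. Phit s t' x) has_real_derivative x \<bullet> (DT *v x)) (at t within {0..1})"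
    using qf_vderiv[OF DT, of x] by (simp add: Phit_def)
  define a where "a = (As s t *v x) \<bullet> (As s t *v x)"
  define b where "b = (At s t *v x) \<bullet> (At s t *v x)"
  define c where "c = (As s t *v x) \<bullet> (At s t *v x)"
  have q0: "x \<bullet> (DS *v x) + x \<bullet> (DT *v x) + ((1/2) * inverse (J s t)) *
      (Ttt s t * a + Tss s t * b - ((1/2) * Tst s t) * (c + c)) = 0"
  proof -
    have "x \<bullet> ((DS + DT + ((1/2) * inverse (J s t)) *\<^sub>R
          (Ttt s t *\<^sub>R (transpose (As s t) ** As s t) + Tss s t *\<^sub>R (transpose (At s t) ** At s t)
           - ((1/2) * Tst s t) *\<^sub>R (transpose (As s t) ** At s t + transpose (At s t) ** As s t))) *v x) = 0"
      unfolding sumeq by simp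
    then show ?thesis
      by (simp only: qf_lin a_def b_def c_def inner_commute[of "At s t *v x" "As s t *v x"])
  qed
  have P3: "x \<bullet> (DS *v x) + x \<bullet> (DT *v x) + inverse (Aa s t) *
          ((1/2) * (norm (vs s t x))\<^sup>2 * Itt s t + (1/2) * (norm (vt s t x))\<^sup>2 * Iss s t
           - (vt s t x \<bullet> vs s t x) * Ist s t) = 0"
  proof -
    have "(1/2) * (norm (vs s t x))\<^sup>2 * Itt s t + (1/2) * (norm (vt s t x))\<^sup>2 * Iss s t
           - (vt s t x \<bullet> vs s t x) * Ist s t = k * ((1/2) * a * Ttt s t + (1/2) * b * Tss s t - c * ((1/2) * Tst s t))"
      by (simp add: vs_def vt_def a_def b_def c_def power2_norm_eq_inner hItt hIss hIst inner_commute algebra_simps)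
    then have "inverse (Aa s t) * ((1/2) * (norm (vs s t x))\<^sup>2 * Itt s t + (1/2) * (norm (vt s t x))\<^sup>2 * Iss s t
           - (vt s t x \<bullet> vs s t x) * Ist s t) = inverse (J s t) * ((1/2) * a * Ttt s t + (1/2) * b * Tss s t - c * ((1/2) * Tst s t))"
      using inv_cancel[OF knz, of "J s t"] by (simp add: hAa mult.assoc[symmetric])
    moreover have "((1/2) * inverse (J s t)) * (Ttt s t * a + Tss s t * b - ((1/2) * Tst s t) * (c + c))
        = inverse (J s t) * ((1/2) * a * Ttt s t + (1/2) * b * Tss s t - c * ((1/2) * Tst s t))"
      by (simp add: algebra_simps)
    ultimately show ?thesis using q0 by linarith
  qed
  have P4: "\<exists>D L. ((\<lambda>s'. rho s' t x) has_real_derivative D) (at s within {0..1}) \<and>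
        ((\<lambda>y. rho s t y *\<^sub>R vs s t y) has_derivative L) (at x) \<and> D + div_lin L = 0"
  proof -
    have d: "((\<lambda>s'. Sig s' t) has_vector_derivative (Sig s t ** transpose (As s t) + As s t ** Sig s t)) (at s within {0..1})"
      using dSig_s s t by blast
    have p: "pos_def_mat (Sig s t)" using pd s t by blast
    show ?thesis using rho_cont_eq[where F="\<lambda>s'. Sig s' t", OF d p, of x] by (simp add: rho_def vs_def)
  qed
  have P5: "\<exists>D L. ((\<lambda>t'. rho s t' x) has_real_derivative D) (at t within {0..1}) \<and>
        ((\<lambda>y. rho s t y *\<^sub>R vt s t y) has_derivative L) (at x) \<and> D + div_lin L = 0"
  proof -
    have d: "((\<lambda>t'. Sig s t') has_vector_derivative (Sig s t ** transpose (At s t) + At s t ** Sig s t)) (at t within {0..1})"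
      using dSig_t s t by blast
    have p: "pos_def_mat (Sig s t)" using pd s t by blast
    show ?thesis using rho_cont_eq[where F="\<lambda>t'. Sig s t'", OF d p, of x] by (simp add: rho_def vt_def)
  qed
  show "(GDERIV (Phis s t) x :> inverse (Aa s t) *\<^sub>R (Itt s t *\<^sub>R vs s t x - Ist s t *\<^sub>R vt s t x)) \<and>
     (GDERIV (Phit s t) x :> inverse (Aa s t) *\<^sub>R (Iss s t *\<^sub>R vt s t x - Ist s t *\<^sub>R vs s t x)) \<and>
     (\<exists>Ds Dt.
        ((\<lambda>s'. Phis s' t x) has_real_derivative Ds) (at s within {0..1}) \<and>
        ((\<lambda>t'. Phit s t' x) has_real_derivative Dt) (at t within {0..1}) \<and>
        Ds + Dt + inverse (Aa s t) *
          ((1/2) * (norm (vs s t x))\<^sup>2 * Itt s t + (1/2) * (norm (vt s t x))\<^sup>2 * Iss s t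
           - (vt s t x \<bullet> vs s t x) * Ist s t) = 0) \<and>
     (\<exists>D L. ((\<lambda>s'. rho s' t x) has_real_derivative D) (at s within {0..1}) \<and>
        ((\<lambda>y. rho s t y *\<^sub>R vs s t y) has_derivative L) (at x) \<and> D + div_lin L = 0) \<and>
     (\<exists>D L. ((\<lambda>t'. rho s t' x) has_real_derivative D) (at t within {0..1}) \<and>
        ((\<lambda>y. rho s t y *\<^sub>R vt s t y) has_derivative L) (at x) \<and> D + div_lin L = 0)"
    using P1 P2 P3 P4 P5 dPs dPt by blast
qed

end
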